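(* Let $(x,y)$ be a $\delta$-feasible assignment, $V_0\subseteq V$, and $d=\max_{a,b\in V_0}\mathrm{dist}_G(a,b)$. After group shifting on $V_0$ one obtains a $(\delta+d)$-feasible assignment $(x',y')$ in which at most one vertex of $V_0$ has a non-integral $y'$-value, and $\mathrm{radius}_{(x',y')}(v)\le\mathrm{radius}_{(x,y)}(v)$ for every $v\in V\setminus V_0$.
   Context: $G=(V,E)$ undirected unweighted graph with shortest-path distance $\mathrm{dist}_G$, $L:V\to\mathbb{N}$, $k$ a positive integer. An assignment is a pair $x:V\times V\to\mathbb{R}_{\ge0}$, $y:V\to\mathbb{R}_{\ge0}$; it is $\delta$-feasible if: (1) $\sum_u y_u=k$; (2) $x_{u,v}\le y_u$; (3) $\sum_v x_{u,v}\le L(u)y_u$; (4) $\sum_u x_{u,v}=1$; (5) $0\le y_u\le1$; (6) $x_{u,v}=0$ whenever $\mathrm{dist}_G(u,v)>\delta$; (7) $x_{u,v}\ge0$. $\mathrm{radius}_{(x,y)}(u)$ is the largest integer $i$ such that some $v$ has $\mathrm{dist}_G(v,u)=i$ and $x_{u,v}>0$ ($0$ if none). Shifting $\alpha$ from $a$ to $b$ (where $a\neq b$, $L(a)\le L(b)$, $0<\alpha\le\min(y_a,1-y_b)$): with $\epsilon=\alpha/y_a$, for each $v$ move $\epsilon x_{a,v}$ from $x_{a,v}$ to $x_{b,v}$, and increase $y_b$ by $\alpha$, decrease $y_a$ by $\alpha$. Group shifting on $V_0=\{v_1,\dots,v_\ell\}$, indexed so that $L(v_i)\le L(v_{i+1})$: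 as long as at least two vertices of $V_0$ have fractional (non-integral) $y$-value, let $a$ be the smallest and $b$ the largest index such that $y_{v_a}$ and $y_{v_b}$ are fractional, and shift $\min(y_{v_a},1-y_{v_b})$ from $v_a$ to $v_b$. *)

theory Defs
  imports Complex_Main "HOL-Library.Extended_Nat"
begin

definition ugraph :: "'a set \<Rightarrow> ('a \<Rightarrow> 'a \<Rightarrow> bool) \<Rightarrow> bool" where
  "ugraph V E \<longleftrightarrow> finite V \<and> (\<forall>u v. E u v \<longrightarrow> u \<in> V \<and> v \<in> V) \<and> (\<forall>u v. E u v \<longrightarrow> E v u)"

definition walk :: "'a set \<Rightarrow> ('a \<Rightarrow> 'a \<Rightarrow> bool) \<Rightarrow> 'a \<Rightarrow> 'a \<Rightarrow> nat \<Rightarrow> bool" where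
  "walk V E u v n \<longleftrightarrow> (\<exists>p. length p = Suc n \<and> hd p = u \<and> last p = v \<and> set p \<subseteq> V
      \<and> (\<forall>i<n. E (p ! i) (p ! Suc i)))"

definition gdist :: "'a set \<Rightarrow> ('a \<Rightarrow> 'a \<Rightarrow> bool) \<Rightarrow> 'a \<Rightarrow> 'a \<Rightarrow> enat" where
  "gdist V E u v = (if \<exists>n. walk V E u v n then enat (LEAST n. walk V E u v n) else \<infinity>)"

definition feasible :: "'a set \<Rightarrow> ('a \<Rightarrow> 'a \<Rightarrow> bool) \<Rightarrow> ('a \<Rightarrow> nat) \<Rightarrow> nat \<Rightarrow> enat
    \<Rightarrow> ('a \<Rightarrow> 'a \<Rightarrow> real) \<Rightarrow> ('a \<Rightarrow> real) \<Rightarrow> bool" where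
  "feasible V E L k \<delta> x y \<longleftrightarrow>
     (\<Sum>u\<in>V. y u) = real k
   \<and> (\<forall>u\<in>V. \<forall>v\<in>V. x u v \<le> y u)
   \<and> (\<forall>u\<in>V. (\<Sum>v\<in>V. x u v) \<le> real (L u) * y u)
   \<and> (\<forall>v\<in>V. (\<Sum>u\<in>V. x u v) = 1)
   \<and> (\<forall>u\<in>V. 0 \<le> y u \<and> y u \<le> 1)
   \<and> (\<forall>u\<in>V. \<forall>v\<in>V. gdist V E u v > \<delta> \<longrightarrow> x u v = 0)
   \<and> (\<forall>u\<in>V. \<forall>v\<in>V. x u v \<ge> 0)"

definition radius :: "'a set \<Rightarrow> ('a \<Rightarrow> 'a \<Rightarrow> bool) \<Rightarrow> ('a \<Rightarrow> 'a \<Rightarrow> real) \<Rightarrow> 'a \<Rightarrow> nat" where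
  "radius V E x u = Max ({0} \<union> {i. \<exists>v\<in>V. gdist V E v u = enat i \<and> x u v > 0})"

definition shift :: "('a \<Rightarrow> 'a \<Rightarrow> real) \<Rightarrow> ('a \<Rightarrow> real) \<Rightarrow> 'a \<Rightarrow> 'a \<Rightarrow> real
    \<Rightarrow> ('a \<Rightarrow> 'a \<Rightarrow> real) \<times> ('a \<Rightarrow> real)" where
  "shift x y a b \<alpha> =
    (let \<epsilon> = \<alpha> / y a in
     ((\<lambda>u v. if u = a then x a v - \<epsilon> * x a v
             else if u = b then x b v + \<epsilon> * x a v
             else x u v),
      y(a := y a - \<alpha>, b := y b + \<alpha>)))"

definition fractional :: "real \<Rightarrow> bool" where
  "fractional r \<longleftrightarrow> r \<notin> \<int>"

definition gs_step :: "'a list \<Rightarrow> ('a \<Rightarrow> 'a \<Rightarrow> real) \<times> ('a \<Rightarrow> real)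
    \<Rightarrow> ('a \<Rightarrow> 'a \<Rightarrow> real) \<times> ('a \<Rightarrow> real)" where
  "gs_step vs st =
    (let x = fst st; y = snd st;
         F = {i. i < length vs \<and> fractional (y (vs ! i))} in
     if card F \<ge> 2 then
       (let a = vs ! (LEAST i. i \<in> F); b = vs ! (GREATEST i. i \<in> F) in
        shift x y a b (min (y a) (1 - y b)))
     else st)"

end

theory Submission
  imports Defs
begin

lemma walk_append:
  assumes "walk V E u w m" "walk V E w v n" shows "walk V E u v (m+n)"
proof -
  obtain p where p: "length p = Suc m" "hd p = u" "last p = w" "set p \<subseteq> V" "\<forall>i<m. E (p ! i) (p ! Suc i)"
    using assms(1) unfolding walk_def by blast
  obtain q where q: "length q = Suc n" "hd q = w" "last q = v" "set q \<subseteq> V" "\<forall>i<n. E (q ! i) (q ! Suc i)"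
    using assms(2) unfolding walk_def by blast
  define r where "r = butlast p @ q"
  have lb: "length (butlast p) = m" using p by simp
  have pm: "p ! m = w" using p by (metis diff_Suc_1 last_conv_nth list.size(3) nat.simps(3))
  have q0: "q ! 0 = w" using q by (metis hd_conv_nth list.size(3) nat.simps(3))
  have ri: "r ! i = (if i < m then p ! i else q ! (i - m))" for i
    using lb unfolding r_def by (simp add: nth_append nth_butlast p(1))
  have "length r = Suc (m+n)" using lb q by (simp add: r_def)
  moreover have "hd r = u"
  proof (cases m)
    case 0 then have "butlast p = []" using lb by (metis length_0_conv)
    then show ?thesis using q p 0 by (simp add: r_def) (metis hd_conv_nth last_conv_nth length_0_conv nat.simps(3) diff_Suc_1)
  next
    case (Suc m') then have "butlast p \<noteq> []" using lb by (metis length_0_conv nat.simps(3))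
    moreover have "p \<noteq> []" using p(1) by auto
    ultimately have "hd (butlast p) = hd p" by (metis append_butlast_last_id hd_append2)
    then show ?thesis using p \<open>butlast p \<noteq> []\<close> by (simp add: r_def)
  qed
  moreover have "last r = v"
  proof -
    have "q \<noteq> []" using q(1) by auto
    then show ?thesis using q(3) by (simp add: r_def)
  qed
  moreover have "set r \<subseteq> V" using p q by (auto simp: r_def dest: in_set_butlastD)
  moreover have "\<forall>i<m+n. E (r ! i) (r ! Suc i)"
  proof (intro allI impI)
    fix i assume i: "i < m+n"
    show "E (r ! i) (r ! Suc i)"
    proof (cases "Suc i < m")
      case True then show ?thesis using p(5) by (simp add: ri)
    next
      case False note F = this
      show ?thesis
      proof (cases "i < m")
        case True
        then have "i = m - 1" "Suc i = m" using F by auto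
        then have "r ! i = p ! i" "r ! Suc i = p ! Suc i" using True by (simp_all add: ri pm q0)
        then show ?thesis using p(5) True by simp
      next
        case False
        then have "Suc i - m = Suc (i - m)" by auto
        then show ?thesis using q(5) False F i by (simp add: ri)
      qed
    qed
  qed
  ultimately show ?thesis unfolding walk_def by blast
qed

lemma gdist_tri: "gdist V E u v \<le> gdist V E u w + gdist V E w v"
proof (cases "(\<exists>n. walk V E u w n) \<and> (\<exists>n. walk V E w v n)")
  case True
  then obtain m n where mn: "walk V E u w m" "walk V E w v n" by blast
  let ?m = "LEAST n. walk V E u w n" and ?n = "LEAST n. walk V E w v n"
  have "walk V E u w ?m" "walk V E w v ?n" using mn by (auto intro: LeastI)
  then have w: "walk V E u v (?m + ?n)" by (rule walk_append)
  then have "(LEAST n. walk V E u v n) \<le> ?m + ?n" by (rule Least_le)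
  then show ?thesis using True w unfolding gdist_def by auto
next
  case False then show ?thesis unfolding gdist_def by auto
qed


definition bfeas :: "'a set \<Rightarrow> ('a \<Rightarrow> nat) \<Rightarrow> nat \<Rightarrow> ('a \<Rightarrow> 'a \<Rightarrow> real) \<Rightarrow> ('a \<Rightarrow> real) \<Rightarrow> bool" where
  "bfeas V L k x y \<longleftrightarrow>
     (\<Sum>u\<in>V. y u) = real k
   \<and> (\<forall>u\<in>V. \<forall>v\<in>V. x u v \<le> y u)
   \<and> (\<forall>u\<in>V. (\<Sum>v\<in>V. x u v) \<le> real (L u) * y u)
   \<and> (\<forall>v\<in>V. (\<Sum>u\<in>V. x u v) = 1)
   \<and> (\<forall>u\<in>V. 0 \<le> y u \<and> y u \<le> 1)
   \<and> (\<forall>u\<in>V. \<forall>v\<in>V. x u v \<ge> 0)"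

lemma shift_bfeas:
  assumes bf: "bfeas V L k x y" and fin: "finite V" and ab: "a \<in> V" "b \<in> V" "a \<noteq> b" "L a \<le> L b"
    and ya: "0 < y a" and al: "0 < \<alpha>" "\<alpha> \<le> y a" "\<alpha> \<le> 1 - y b"
    and st: "st = shift x y a b \<alpha>"
  shows "bfeas V L k (fst st) (snd st)"
    and "\<And>u v. fst st u v > 0 \<Longrightarrow> x u v > 0 \<or> (u = b \<and> x a v > 0)"
    and "\<And>u. u \<noteq> a \<Longrightarrow> u \<noteq> b \<Longrightarrow> fst st u = x u"
    and "snd st = y(a := y a - \<alpha>, b := y b + \<alpha>)"
proof -
  define e where "e = \<alpha> / y a"
  have e0: "0 < e" and e1: "e \<le> 1" and ea: "e * y a = \<alpha>" using ya al by (auto simp: e_def field_simps)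
  define x' where "x' = (\<lambda>u v. if u = a then x a v - e * x a v
             else if u = b then x b v + e * x a v else x u v)"
  define y' where "y' = y(a := y a - \<alpha>, b := y b + \<alpha>)"
  have sts: "st = (x', y')" unfolding st shift_def x'_def y'_def e_def Let_def by simp
  show "snd st = y(a := y a - \<alpha>, b := y b + \<alpha>)" using sts y'_def by simp
  show "\<And>u. u \<noteq> a \<Longrightarrow> u \<noteq> b \<Longrightarrow> fst st u = x u" using sts by (auto simp: x'_def)
  have B: "(\<Sum>u\<in>V. y u) = real k" "\<forall>u\<in>V. \<forall>v\<in>V. x u v \<le> y u"
     "\<forall>u\<in>V. (\<Sum>v\<in>V. x u v) \<le> real (L u) * y u" "\<forall>v\<in>V. (\<Sum>u\<in>V. x u v) = 1"
     "\<forall>u\<in>V. 0 \<le> y u \<and> y u \<le> 1" "\<forall>u\<in>V. \<forall>v\<in>V. x u v \<ge> 0" using bf unfolding bfeas_def by auto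
  show "\<And>u v. fst st u v > 0 \<Longrightarrow> x u v > 0 \<or> (u = b \<and> x a v > 0)"
  proof -
    fix u v assume "fst st u v > 0"
    then have h: "x' u v > 0" using sts by simp
    show "x u v > 0 \<or> (u = b \<and> x a v > 0)"
    proof (cases "u = a")
      case True then have "x' u v = (1 - e) * x a v" using x'_def by (simp add: algebra_simps)
      then show ?thesis using h True e1 by (metis mult_le_0_iff diff_ge_0_iff_ge not_le)
    next
      case False
      have "x a v \<le> 0 \<Longrightarrow> e * x a v \<le> 0" using e0 by (simp add: mult_nonneg_nonpos)
      then show ?thesis using h False by (auto simp: x'_def split: if_splits)
    qed
  qed
  have yeq: "y' u = y u + (if u = a then - \<alpha> else 0) + (if u = b then \<alpha> else 0)" for u
    using ab(3) by (auto simp: y'_def)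
  have xeq: "x' u v = x u v + (if u = a then - (e * x a v) else 0) + (if u = b then e * x a v else 0)" for u v
    using ab(3) by (auto simp: x'_def)
  have s1: "(\<Sum>u\<in>V. y' u) = real k"
    unfolding yeq sum.distrib using fin ab B(1) by (simp add: sum.delta)
  have s4: "\<forall>v\<in>V. (\<Sum>u\<in>V. x' u v) = 1"
    unfolding xeq sum.distrib using fin ab B(4) by (simp add: sum.delta)
  have s5: "\<forall>u\<in>V. 0 \<le> y' u \<and> y' u \<le> 1"
    using B(5) al ab by (auto simp: y'_def)
  have ya': "y' a = y a - \<alpha>" and yb': "y' b = y b + \<alpha>" using ab(3) by (auto simp: y'_def)
  have xa: "x' a v = (1 - e) * x a v" for v using x'_def by (simp add: algebra_simps)
  have xb: "x' b v = x b v + e * x a v" for v using x'_def ab(3) by simp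
  have s6: "\<forall>u\<in>V. \<forall>v\<in>V. x' u v \<ge> 0"
    using B(6) ab e0 e1 by (auto simp: x'_def intro: mult_left_le_one_le)
  have s2: "\<forall>u\<in>V. \<forall>v\<in>V. x' u v \<le> y' u"
  proof (intro ballI)
    fix u v assume uv: "u \<in> V" "v \<in> V"
    show "x' u v \<le> y' u"
    proof (cases "u = a")
      case True
      have "(1 - e) * x a v \<le> (1 - e) * y a" using B(2) ab uv e1 by (intro mult_left_mono) auto
      moreover have "(1 - e) * y a = y a - \<alpha>" using ea by (simp add: algebra_simps)
      ultimately show ?thesis using True xa ya' by simp
    next
      case F: False
      show ?thesis
      proof (cases "u = b")
        case True
        have "e * x a v \<le> e * y a" using B(2) ab uv e0 by (intro mult_left_mono) auto
        moreover have "x b v \<le> y b" using B(2) uv ab by auto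
        ultimately show ?thesis using True F xb ea yb' by simp
      next
        case False then show ?thesis using F B(2) uv by (simp add: x'_def y'_def)
      qed
    qed
  qed
  have s3: "\<forall>u\<in>V. (\<Sum>v\<in>V. x' u v) \<le> real (L u) * y' u"
  proof (intro ballI)
    fix u assume uv: "u \<in> V"
    show "(\<Sum>v\<in>V. x' u v) \<le> real (L u) * y' u"
    proof (cases "u = a")
      case True
      have "(1 - e) * (\<Sum>v\<in>V. x a v) \<le> (1 - e) * (real (L a) * y a)" using B(3) ab e1 by (intro mult_left_mono) auto
      moreover have "(1 - e) * (real (L a) * y a) = real (L a) * (y a - \<alpha>)" using ea by (simp add: algebra_simps)
      moreover have "(\<Sum>v\<in>V. x' a v) = (1 - e) * (\<Sum>v\<in>V. x a v)" by (simp add: xa sum_distrib_left)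
      ultimately show ?thesis using True ya' by simp
    next
      case F: False
      show ?thesis
      proof (cases "u = b")
        case True
        have "e * (\<Sum>v\<in>V. x a v) \<le> e * (real (L a) * y a)" using B(3) ab e0 by (intro mult_left_mono) auto
        also have "\<dots> = real (L a) * \<alpha>" using ea by (simp add: algebra_simps)
        also have "\<dots> \<le> real (L b) * \<alpha>" using ab(4) al by (intro mult_right_mono) auto
        finally have "(\<Sum>v\<in>V. x' b v) \<le> real (L b) * y b + real (L b) * \<alpha>"
          using B(3) ab(2) by (simp add: xb sum.distrib sum_distrib_left add_mono)
        then show ?thesis using True F yb' by (simp add: algebra_simps)
      next
        case False then show ?thesis using F B(3) uv by (simp add: x'_def y'_def)
      qed
    qed
  qed
  show "bfeas V L k (fst st) (snd st)" using sts s1 s2 s3 s4 s5 s6 unfolding bfeas_def by simp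
qed


definition Fc :: "'a list \<Rightarrow> ('a \<Rightarrow> real) \<Rightarrow> nat set" where
  "Fc vs y = {i. i < length vs \<and> fractional (y (vs ! i))}"

definition Inv :: "'a set \<Rightarrow> ('a \<Rightarrow> nat) \<Rightarrow> nat \<Rightarrow> ('a \<Rightarrow> 'a \<Rightarrow> real) \<Rightarrow> 'a set
   \<Rightarrow> ('a \<Rightarrow> 'a \<Rightarrow> real) \<times> ('a \<Rightarrow> real) \<Rightarrow> bool" where
  "Inv V L k x V0 st \<longleftrightarrow> bfeas V L k (fst st) (snd st)
     \<and> (\<forall>u\<in>V. \<forall>v\<in>V. fst st u v > 0 \<longrightarrow> x u v > 0 \<or> (u \<in> V0 \<and> (\<exists>w\<in>V0. x w v > 0)))
     \<and> (\<forall>u. u \<notin> V0 \<longrightarrow> fst st u = x u)"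

lemma frac01: "fractional r \<Longrightarrow> 0 \<le> r \<Longrightarrow> r \<le> 1 \<Longrightarrow> 0 < r \<and> r < 1"
  unfolding fractional_def by (metis Ints_0 Ints_1 le_less)

lemma gs_step_ok:
  assumes fin: "finite V" and V0: "V0 \<subseteq> V" "set vs = V0" "distinct vs" "sorted (map L vs)"
    and inv: "Inv V L k x V0 st" and c2: "card (Fc vs (snd st)) \<ge> 2"
  shows "Inv V L k x V0 (gs_step vs st) \<and> card (Fc vs (snd (gs_step vs st))) < card (Fc vs (snd st))"
proof -
  obtain x1 y1 where st: "st = (x1, y1)" by (cases st)
  define F where "F = Fc vs y1"
  have Fd: "F = {i. i < length vs \<and> fractional (y1 (vs ! i))}" unfolding F_def Fc_def ..
  have finF: "finite F" unfolding Fd by simp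
  have c2': "card F \<ge> 2" using c2 st F_def by simp
  obtain i j where ij: "i \<in> F" "j \<in> F" "i \<noteq> j" 
  proof -
    have "\<not> card F \<le> Suc 0" using c2' by simp
    then show ?thesis using card_le_Suc0_iff_eq[OF finF] that by blast
  qed
  define ia where "ia = (LEAST i. i \<in> F)"
  define ib where "ib = (GREATEST i. i \<in> F)"
  have bnd: "\<And>y. y \<in> F \<Longrightarrow> y \<le> length vs" unfolding Fd by auto
  have iaF: "ia \<in> F" unfolding ia_def using ij by (auto intro: LeastI)
  have ibF: "ib \<in> F" unfolding ib_def using GreatestI_nat[of "\<lambda>i. i \<in> F", OF ij(1) bnd] by simp
  have "ia \<le> min i j" unfolding ia_def using ij by (auto intro: Least_le)
  moreover have "max i j \<le> ib" unfolding ib_def using Greatest_le_nat[of "\<lambda>i. i \<in> F", OF ij(1) bnd] Greatest_le_nat[of "\<lambda>i. i \<in> F", OF ij(2) bnd] by simp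
  ultimately have iab: "ia < ib" using ij(3) by linarith
  define a where "a = vs ! ia"
  define b where "b = vs ! ib"
  have ialen: "ia < length vs" and iblen: "ib < length vs" using iaF ibF Fd by auto
  have aV0: "a \<in> V0" and bV0: "b \<in> V0" using ialen iblen V0 a_def b_def by auto
  have aV: "a \<in> V" and bV: "b \<in> V" using aV0 bV0 V0 by auto
  have ab: "a \<noteq> b" using iab nth_eq_iff_index_eq[OF V0(3) ialen iblen] a_def b_def by auto
  have "map L vs ! ia \<le> map L vs ! ib" by (rule sorted_nth_mono[OF V0(4)]) (use iab iblen in auto)
  then have Lab: "L a \<le> L b" using ialen iblen unfolding a_def b_def by simp
  have B: "bfeas V L k x1 y1" using inv st unfolding Inv_def by simp
  then have y01: "\<forall>u\<in>V. 0 \<le> y1 u \<and> y1 u \<le> 1" unfolding bfeas_def by simp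
  have fa: "fractional (y1 a)" and fb: "fractional (y1 b)" using iaF ibF Fd a_def b_def by auto
  have ya: "0 < y1 a" "y1 a < 1" using frac01[OF fa] y01 aV by auto
  have yb: "0 < y1 b" "y1 b < 1" using frac01[OF fb] y01 bV by auto
  define \<alpha> where "\<alpha> = min (y1 a) (1 - y1 b)"
  have al: "0 < \<alpha>" "\<alpha> \<le> y1 a" "\<alpha> \<le> 1 - y1 b" using ya yb by (auto simp: \<alpha>_def)
  define st2 where "st2 = shift x1 y1 a b \<alpha>"
  have gs: "gs_step vs st = st2" unfolding gs_step_def st2_def st Let_def
    using c2' Fd a_def b_def ia_def ib_def \<alpha>_def by simp
  note S = shift_bfeas[OF B fin aV bV ab Lab ya(1) al st2_def]
  have inv2: "Inv V L k x V0 st2"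
    unfolding Inv_def
  proof (intro conjI ballI allI impI)
    show "bfeas V L k (fst st2) (snd st2)" by (rule S(1))
  next
    fix u v assume uv: "u \<in> V" "v \<in> V" and p: "0 < fst st2 u v"
    have I2: "\<forall>u\<in>V. \<forall>v\<in>V. x1 u v > 0 \<longrightarrow> x u v > 0 \<or> (u \<in> V0 \<and> (\<exists>w\<in>V0. x w v > 0))"
      using inv st unfolding Inv_def by simp
    from S(2)[OF p] show "x u v > 0 \<or> (u \<in> V0 \<and> (\<exists>w\<in>V0. x w v > 0))"
    proof
      assume "0 < x1 u v" then show ?thesis using I2 uv by blast
    next
      assume h: "u = b \<and> 0 < x1 a v"
      then have "x a v > 0 \<or> (\<exists>w\<in>V0. x w v > 0)" using I2 aV uv by blast
      then show ?thesis using h bV0 aV0 by blast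
    qed
  next
    fix u assume "u \<notin> V0"
    then have "u \<noteq> a" "u \<noteq> b" using aV0 bV0 by auto
    then show "fst st2 u = x u" using S(3) inv st unfolding Inv_def
      by (simp add: \<open>u \<notin> V0\<close>)
  qed
  define y2 where "y2 = snd st2"
  have y2: "y2 = y1(a := y1 a - \<alpha>, b := y1 b + \<alpha>)" using S(4) y2_def by simp
  have int: "y2 a = 0 \<or> y2 b = 1" using y2 ab by (auto simp: \<alpha>_def min_def)
  have sub: "Fc vs y2 \<subseteq> F"
  proof
    fix i assume "i \<in> Fc vs y2"
    then have i: "i < length vs" "fractional (y2 (vs ! i))" unfolding Fc_def by auto
    show "i \<in> F"
    proof (cases "vs ! i = a \<or> vs ! i = b")
      case True
      then have "i = ia \<or> i = ib" using nth_eq_iff_index_eq[OF V0(3) i(1) ialen] nth_eq_iff_index_eq[OF V0(3) i(1) iblen] a_def b_def by auto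
      then show ?thesis using iaF ibF by auto
    next
      case False then show ?thesis using i y2 Fd by auto
    qed
  qed
  have notall: "ia \<notin> Fc vs y2 \<or> ib \<notin> Fc vs y2"
    using int unfolding Fc_def fractional_def by (auto simp: a_def[symmetric] b_def[symmetric])
  have "Fc vs y2 \<subset> F" using sub notall iaF ibF by auto
  then have "card (Fc vs y2) < card F" using finF psubset_card_mono by blast
  then show ?thesis using gs inv2 y2_def F_def st by simp
qed

lemma gs_step_id: "card (Fc vs (snd st)) < 2 \<Longrightarrow> gs_step vs st = st"
  unfolding gs_step_def Fc_def Let_def by simp

lemma gs_iter:
  assumes fin: "finite V" and V0: "V0 \<subseteq> V" "set vs = V0" "distinct vs" "sorted (map L vs)"
  shows "Inv V L k x V0 st \<Longrightarrow> \<exists>n. Inv V L k x V0 ((gs_step vs ^^ n) st) \<and> card (Fc vs (snd ((gs_step vs ^^ n) st))) \<le> 1"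
proof (induction "card (Fc vs (snd st))" arbitrary: st rule: less_induct)
  case less
  show ?case
  proof (cases "card (Fc vs (snd st)) \<ge> 2")
    case True
    note G = gs_step_ok[OF fin V0 less.prems True]
    then obtain n where n: "Inv V L k x V0 ((gs_step vs ^^ n) (gs_step vs st)) \<and> card (Fc vs (snd ((gs_step vs ^^ n) (gs_step vs st)))) \<le> 1"
      using less.hyps by blast
    then show ?thesis by (intro exI[of _ "Suc n"]) (simp add: funpow_Suc_right del: funpow.simps)
  next
    case False then show ?thesis using less.prems by (intro exI[of _ 0]) simp
  qed
qed


theorem mainTheorem10:
  fixes V :: "'a set" and E :: "'a \<Rightarrow> 'a \<Rightarrow> bool" and L :: "'a \<Rightarrow> nat" and k :: nat
    and \<delta> :: enat and x :: "'a \<Rightarrow> 'a \<Rightarrow> real" and y :: "'a \<Rightarrow> real"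
    and V0 :: "'a set" and vs :: "'a list"
  assumes "ugraph V E" and "k > 0"
    and "feasible V E L k \<delta> x y"
    and "V0 \<subseteq> V"
    and "distinct vs" and "set vs = V0" and "sorted (map L vs)"
  shows "\<exists>n x' y'. (x', y') = (gs_step vs ^^ n) (x, y)
           \<and> feasible V E L k (\<delta> + Sup {gdist V E a b | a b. a \<in> V0 \<and> b \<in> V0}) x' y'
           \<and> card {v \<in> V0. fractional (y' v)} \<le> 1
           \<and> (\<forall>v \<in> V - V0. radius V E x' v \<le> radius V E x v)"
proof -
  have fin: "finite V" using assms(1) unfolding ugraph_def by simp
  define D where "D = Sup {gdist V E a b | a b. a \<in> V0 \<and> b \<in> V0}"
  have bf: "bfeas V L k x y" using assms(3) unfolding feasible_def bfeas_def by simp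
  have dist0: "\<forall>u\<in>V. \<forall>v\<in>V. gdist V E u v > \<delta> \<longrightarrow> x u v = 0" using assms(3) unfolding feasible_def by simp
  have "Inv V L k x V0 (x, y)" using bf unfolding Inv_def by simp
  from gs_iter[OF fin assms(4) assms(6) assms(5) assms(7) this] obtain n where
    n: "Inv V L k x V0 ((gs_step vs ^^ n) (x, y))" "card (Fc vs (snd ((gs_step vs ^^ n) (x, y)))) \<le> 1" by blast
  obtain x' y' where xy: "(gs_step vs ^^ n) (x, y) = (x', y')" by (cases "(gs_step vs ^^ n) (x, y)")
  have I: "bfeas V L k x' y'"
    "\<forall>u\<in>V. \<forall>v\<in>V. x' u v > 0 \<longrightarrow> x u v > 0 \<or> (u \<in> V0 \<and> (\<exists>w\<in>V0. x w v > 0))"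
    "\<forall>u. u \<notin> V0 \<longrightarrow> x' u = x u" using n(1) xy unfolding Inv_def by auto
  have le: "gdist V E u v \<le> \<delta>" if "u \<in> V" "v \<in> V" "x u v > 0" for u v
  proof (rule ccontr)
    assume "\<not> gdist V E u v \<le> \<delta>"
    then have "\<delta> < gdist V E u v" by (simp add: not_le)
    then have "x u v = 0" using dist0 that(1,2) by blast
    then show False using that(3) by simp
  qed
  have dd: "\<delta> \<le> \<delta> + D" by simp
  have feas: "feasible V E L k (\<delta> + D) x' y'"
  proof -
    have "\<forall>u\<in>V. \<forall>v\<in>V. gdist V E u v > \<delta> + D \<longrightarrow> x' u v = 0"
    proof (intro ballI impI)
      fix u v assume uv: "u \<in> V" "v \<in> V" and g: "gdist V E u v > \<delta> + D"
      show "x' u v = 0"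
      proof (rule ccontr)
        assume "x' u v \<noteq> 0"
        moreover have "\<forall>u\<in>V. \<forall>v\<in>V. x' u v \<ge> 0" using I(1) unfolding bfeas_def by (elim conjE)
        then have "x' u v \<ge> 0" using uv by simp
        ultimately have "x' u v > 0" by linarith
        then have "x u v > 0 \<or> (u \<in> V0 \<and> (\<exists>w\<in>V0. x w v > 0))" using I(2) uv by blast
        then show False
        proof
          assume "x u v > 0" then have "gdist V E u v \<le> \<delta>" using le uv by blast
          then have "gdist V E u v \<le> \<delta> + D" using dd by (rule order_trans)
          then show False using g by simp
        next
          assume "u \<in> V0 \<and> (\<exists>w\<in>V0. x w v > 0)"
          then obtain w where w: "u \<in> V0" "w \<in> V0" "x w v > 0" by blast
          have "gdist V E w v \<le> \<delta>" using le w assms(4) uv by blast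
          moreover have "gdist V E u w \<le> D" unfolding D_def using w by (intro Sup_upper) blast
          ultimately have "gdist V E u w + gdist V E w v \<le> D + \<delta>" by (rule add_mono[rotated])
          then have "gdist V E u w + gdist V E w v \<le> \<delta> + D" by (simp add: add.commute)
          then have "gdist V E u v \<le> \<delta> + D" by (rule order_trans[OF gdist_tri])
          then show False using g by simp
        qed
      qed
    qed
    then show ?thesis using I(1) unfolding feasible_def bfeas_def by simp
  qed
  have "{v \<in> V0. fractional (y' v)} = (\<lambda>i. vs ! i) ` Fc vs y'"
    unfolding Fc_def using assms(6) by (auto simp: in_set_conv_nth)
  moreover have "card ((\<lambda>i. vs ! i) ` Fc vs y') \<le> card (Fc vs y')"
    by (rule card_image_le) (simp add: Fc_def)
  ultimately have card: "card {v \<in> V0. fractional (y' v)} \<le> 1" using n(2) xy by simp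
  have rad: "\<forall>v \<in> V - V0. radius V E x' v \<le> radius V E x v"
  proof
    fix v assume "v \<in> V - V0"
    then have "x' v = x v" using I(3) by blast
    then show "radius V E x' v \<le> radius V E x v" by (simp add: radius_def)
  qed
  show ?thesis unfolding D_def[symmetric]
    by (rule exI[of _ n], rule exI[of _ x'], rule exI[of _ y']) (use xy feas card rad in simp)
qed

end
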